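(* Suppose the budget and utility parameters of users are drawn i.i.d. from a distribution $\mathcal{D}$ such that for each good $j$, $\mathbb{P}_{\mathcal{D}}(u_j>0)>0$, and suppose the price vectors of the revealed preference algorithm described below satisfy $\mathbf{p}^t\ge\underline{\mathbf{p}}>\mathbf{0}$ for all users $t\in[n]$. Then, when the step size is $\gamma=\gamma_t=\bar D/\sqrt n$ for some $0<\bar D\le 1$, the price vectors are bounded: $\mathbf{p}^t\le\bar{\mathbf{p}}$ for all $t\in[n]$ for some constant vector $\bar{\mathbf{p}}\ge\underline{\mathbf{p}}$.
   Context: Online Fisher market: $m$ divisible goods, good $j$ with capacity $c_j=nd_j$, $\mathbf{d}>\mathbf{0}$; $n$ users with $(w_t,\mathbf{u}_t)$ i.i.d. from $\mathcal{D}$, budgets $w_t\in[\underline w,\bar w]$ with $\underline w>0$, utilities bounded and nonnegative. Given $\mathbf{p}^t$, user $t$ consumes an optimal solution $\mathbf{x}_t$ of $\max\mathbf{u}_t^\top\mathbf{x}$ s.t. $(\mathbf{p}^t)^\top\mathbf{x}\le w_t$, $\mathbf{x}\ge\mathbf{0}$. Revealed preference algorithm: initialize $\mathbf{p}^1>\mathbf{0}$; $\mathbf{p}^{t+1}=\mathbf{p}^t-\gamma_t(\mathbf{d}-\mathbf{x}_t)$. "Constant" means independent of $n$ and $t$. *)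

theory Defs
  imports "HOL-Probability.Probability"
begin

definition optimal_consumption ::
  "real^'m \<Rightarrow> real \<Rightarrow> real^'m \<Rightarrow> real^'m \<Rightarrow> bool" where
  "optimal_consumption p w u x \<longleftrightarrow>
     (\<forall>j. 0 \<le> x $ j) \<and> p \<bullet> x \<le> w \<and>
     (\<forall>y. (\<forall>j. 0 \<le> y $ j) \<and> p \<bullet> y \<le> w \<longrightarrow> u \<bullet> y \<le> u \<bullet> x)"

end

theory Submission
  imports Defs
begin

lemma coord_le_inner:
  fixes p x :: "real^'m"
  assumes "\<forall>i. 0 \<le> x$i" "\<forall>i. 0 \<le> p$i"
  shows "p$j * x$j \<le> p \<bullet> x"
proof -
  have "p \<bullet> x = (\<Sum>i\<in>UNIV. p$i * x$i)" by (simp add: inner_vec_def)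
  moreover have "p$j * x$j \<le> (\<Sum>i\<in>UNIV. p$i * x$i)"
    by (rule member_le_sum) (use assms in auto)
  ultimately show ?thesis by simp
qed

lemma det_bound:
  fixes p x :: "nat \<Rightarrow> real^'m" and w :: "nat \<Rightarrow> real" and g wh :: real
  assumes plo: "\<forall>t\<in>{1..n}. \<forall>j. plo $ j \<le> p t $ j"
    and xpos: "\<forall>t\<in>{1..n}. \<forall>j. 0 \<le> x t $ j"
    and budget: "\<forall>t\<in>{1..n}. p t \<bullet> x t \<le> w t"
    and wb: "\<forall>t\<in>{1..n}. w t \<le> wh"
    and p1: "p 1 = p1"
    and rec: "\<forall>t. 1 \<le> t \<and> t < n \<longrightarrow> p (Suc t) = p t - g *\<^sub>R (d - x t)"
    and g: "0 \<le> g" "g \<le> 1"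
    and dpos: "0 < d $ j" and plopos: "\<forall>j. 0 < plo $ j" and wh: "0 \<le> wh"
  shows "1 \<le> t \<Longrightarrow> t \<le> n \<Longrightarrow> p t $ j \<le> max (p1 $ j) (wh / d $ j + wh / plo $ j)"
proof (induction t)
  case 0 then show ?case by simp
next
  case (Suc t)
  show ?case
  proof (cases "t = 0")
    case True then show ?thesis using p1 by simp
  next
    case False
    then have t1: "1 \<le> t" "t < n" using Suc by auto
    have IH: "p t $ j \<le> max (p1 $ j) (wh / d $ j + wh / plo $ j)" using Suc t1 by auto
    have tin: "t \<in> {1..n}" using t1 by auto
    have step: "p (Suc t) $ j = p t $ j - g * (d $ j - x t $ j)" using rec t1 by simp
    have ppos: "\<forall>i. 0 \<le> p t $ i" using plo tin plopos by (meson less_le_trans less_imp_le)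
    have xj: "0 \<le> x t $ j" using xpos tin by auto
    have px: "p t $ j * x t $ j \<le> wh"
      using coord_le_inner[of "x t" "p t" j] xpos ppos tin budget wb by fastforce
    have plj: "plo $ j \<le> p t $ j" "0 < plo $ j" using plo tin plopos by auto
    show ?thesis
    proof (cases "wh / d $ j \<le> p t $ j")
      case True
      have "wh \<le> p t $ j * d $ j" using True dpos by (simp add: divide_le_eq)
      then have "p t $ j * x t $ j \<le> p t $ j * d $ j" using px by linarith
      then have "x t $ j \<le> d $ j" using plj by (smt (verit) mult_le_cancel_left_pos)
      then have "p (Suc t) $ j \<le> p t $ j" using step g by (simp add: mult_nonneg_nonneg)
      then show ?thesis using IH by linarith
    next
      case False
      have "plo $ j * x t $ j \<le> wh" using px plj xj
        by (meson mult_right_mono order_trans)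
      then have xb: "x t $ j \<le> wh / plo $ j" using plj by (simp add: le_divide_eq mult.commute)
      have "g * x t $ j \<le> x t $ j" using g xj by (simp add: mult_left_le_one_le)
      moreover have "0 \<le> g * d $ j" using g dpos by simp
      ultimately have "p (Suc t) $ j \<le> p t $ j + x t $ j" using step by (simp add: algebra_simps)
      then show ?thesis using False xb by linarith
    qed
  qed
qed

theorem lemma9:
  fixes D :: "(real \<times> (real^'m)) measure"
    and d p1 plo :: "real^'m"
    and wl wh ubar Dbar :: real
  assumes "prob_space D" and "sets D = sets borel"
    and "0 < wl" and "wl \<le> wh"
    and "AE z in D. wl \<le> fst z \<and> fst z \<le> wh \<and>
                    (\<forall>j. 0 \<le> snd z $ j \<and> snd z $ j \<le> ubar)"
    and "\<forall>j. measure D {z \<in> space D. 0 < snd z $ j} > 0"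
    and "\<forall>j. 0 < d $ j" and "\<forall>j. 0 < p1 $ j" and "\<forall>j. 0 < plo $ j"
    and "0 < Dbar" and "Dbar \<le> 1"
  shows "\<exists>pbar :: real^'m. (\<forall>j. plo $ j \<le> pbar $ j) \<and>
    (\<forall>(n::nat) (M :: 'w measure) (Z :: nat \<Rightarrow> 'w \<Rightarrow> real \<times> (real^'m))
        (x :: nat \<Rightarrow> 'w \<Rightarrow> real^'m) (p :: nat \<Rightarrow> 'w \<Rightarrow> real^'m).
       prob_space M \<and>
       (\<forall>t\<in>{1..n}. Z t \<in> measurable M D \<and> distr M D (Z t) = D) \<and>
       prob_space.indep_vars M (\<lambda>_. D) Z {1..n} \<and>
       (\<forall>\<omega>. p 1 \<omega> = p1) \<and>
       (\<forall>\<omega> t. 1 \<le> t \<and> t < n \<longrightarrow>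
          p (Suc t) \<omega> = p t \<omega> - (Dbar / sqrt (real n)) *\<^sub>R (d - x t \<omega>))
       \<longrightarrow>
       (AE \<omega> in M.
          (\<forall>t\<in>{1..n}. (\<forall>j. plo $ j \<le> p t \<omega> $ j) \<and>
             optimal_consumption (p t \<omega>) (fst (Z t \<omega>)) (snd (Z t \<omega>)) (x t \<omega>))
          \<longrightarrow> (\<forall>t\<in>{1..n}. \<forall>j. p t \<omega> $ j \<le> pbar $ j)))"
proof (intro exI[of _ "\<chi> j. max (plo $ j) (max (p1 $ j) (wh / d $ j + wh / plo $ j))"] conjI allI impI)
  fix j show "plo $ j \<le> (\<chi> j. max (plo $ j) (max (p1 $ j) (wh / d $ j + wh / plo $ j))) $ j" by simp
next
  fix n :: nat and M :: "'w measure" and Z :: "nat \<Rightarrow> 'w \<Rightarrow> real \<times> (real^'m)"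
    and x :: "nat \<Rightarrow> 'w \<Rightarrow> real^'m" and p :: "nat \<Rightarrow> 'w \<Rightarrow> real^'m"
  assume H: "prob_space M \<and>
       (\<forall>t\<in>{1..n}. Z t \<in> measurable M D \<and> distr M D (Z t) = D) \<and>
       prob_space.indep_vars M (\<lambda>_. D) Z {1..n} \<and>
       (\<forall>\<omega>. p 1 \<omega> = p1) \<and>
       (\<forall>\<omega> t. 1 \<le> t \<and> t < n \<longrightarrow>
          p (Suc t) \<omega> = p t \<omega> - (Dbar / sqrt (real n)) *\<^sub>R (d - x t \<omega>))"
  have wh0: "0 \<le> wh" using assms(3,4) by linarith
  have AEt: "\<forall>t\<in>{1..n}. AE \<omega> in M. fst (Z t \<omega>) \<le> wh"
  proof
    fix t assume t: "t \<in> {1..n}"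
    have "AE z in D. fst z \<le> wh" using assms(5) by (auto elim: AE_mp)
    then have "AE z in distr M D (Z t). fst z \<le> wh" using H t by metis
    then show "AE \<omega> in M. fst (Z t \<omega>) \<le> wh" using H t by (auto intro: AE_distrD)
  qed
  have "AE \<omega> in M. \<forall>t\<in>{1..n}. fst (Z t \<omega>) \<le> wh"
    using AEt by (subst AE_finite_all) auto
  then show "AE \<omega> in M.
          (\<forall>t\<in>{1..n}. (\<forall>j. plo $ j \<le> p t \<omega> $ j) \<and>
             optimal_consumption (p t \<omega>) (fst (Z t \<omega>)) (snd (Z t \<omega>)) (x t \<omega>))
          \<longrightarrow> (\<forall>t\<in>{1..n}. \<forall>j. p t \<omega> $ j \<le> (\<chi> j. max (plo $ j) (max (p1 $ j) (wh / d $ j + wh / plo $ j))) $ j)"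
  proof (rule AE_mp, intro AE_I2 impI ballI allI)
    fix \<omega> t j
    assume W: "\<forall>t\<in>{1..n}. fst (Z t \<omega>) \<le> wh"
      and O: "\<forall>t\<in>{1..n}. (\<forall>j. plo $ j \<le> p t \<omega> $ j) \<and>
             optimal_consumption (p t \<omega>) (fst (Z t \<omega>)) (snd (Z t \<omega>)) (x t \<omega>)"
      and t: "t \<in> {1..n}"
    have g: "0 \<le> Dbar / sqrt (real n)" "Dbar / sqrt (real n) \<le> 1"
    proof -
      show "0 \<le> Dbar / sqrt (real n)" using assms(10) by simp
      have "1 \<le> n" using t by auto
      then have "1 \<le> sqrt (real n)" by simp
      then show "Dbar / sqrt (real n) \<le> 1" using assms(10,11) by (simp add: divide_le_eq del: real_sqrt_ge_1_iff)
    qed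
    have "p t \<omega> $ j \<le> max (p1 $ j) (wh / d $ j + wh / plo $ j)"
      apply (rule det_bound[where p="\<lambda>t. p t \<omega>" and x="\<lambda>t. x t \<omega>" and w="\<lambda>t. fst (Z t \<omega>)"
            and n=n and plo=plo and wh=wh and g="Dbar / sqrt (real n)" and d=d])
      using O W H g assms(7,9) wh0 t unfolding optimal_consumption_def by auto
    then show "p t \<omega> $ j \<le> (\<chi> j. max (plo $ j) (max (p1 $ j) (wh / d $ j + wh / plo $ j))) $ j"
      by simp
  qed
qed

end
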